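(* Let $n\ge2$, $\preceq$ an admissible order on $L([0,1])$, $F\colon L([0,1])^2\to L([0,1])$, $G\colon L([0,1])^n\to L([0,1])$. The IV Sugeno-like $FG$-functional $\mathbf S_m^{F,G}$ is an $n$-dimensional IV aggregation function w.r.t. $\preceq$ for every IV fuzzy measure $m$ whenever: (i) $F(\cdot,\mathbf1)$ is non-decreasing, $F(\mathbf0,\mathbf1)=\mathbf0$, $F(\mathbf1,\mathbf1)=\mathbf1$, and $G=f\circ\mathrm{Proj}_1$ with $f\colon L([0,1])\to L([0,1])$ non-decreasing, $f(\mathbf0)=\mathbf0$, $f(\mathbf1)=\mathbf1$; or (ii) $F(\mathbf0,Y)=\mathbf0$ for all $Y\in L([0,1])$, $F(\mathbf1,\mathbf1)=\mathbf1$, $F$ is non-decreasing (in each variable), and $G=f\circ\vee$ with $f$ non-decreasing, $f(\mathbf0)=\mathbf0$, $f(\mathbf1)=\mathbf1$.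
   Context: $N=\{1,\dots,n\}$. $L([0,1])=\{[a,b]:0\le a\le b\le1\}$, $\mathbf0=[0,0]$, $\mathbf1=[1,1]$. An admissible order $\preceq$ is a total order on $L([0,1])$ with $[a,b]\preceq[c,d]$ whenever $a\le c$, $b\le d$. $\vee$ denotes maximum w.r.t. $\preceq$; monotonicity is w.r.t. $\preceq$; $\mathrm{Proj}_1(X_1,\dots,X_n)=X_1$. An $n$-dimensional IV aggregation function w.r.t. $\preceq$ is $M\colon L([0,1])^n\to L([0,1])$ with $M(\mathbf0,\dots,\mathbf0)=\mathbf0$, $M(\mathbf1,\dots,\mathbf1)=\mathbf1$, non-decreasing in each component w.r.t. $\preceq$. An IV fuzzy measure w.r.t. $\preceq$ is $m\colon2^N\to L([0,1])$, $m(\emptyset)=\mathbf0$, $m(N)=\mathbf1$, $m(A)\preceq m(B)$ for $A\subseteq B$. For a permutation $\sigma$, $E_{\sigma(i)}=\{\sigma(i),\dots,\sigma(n)\}$. $\mathbf S_m^{F,G}(X_1,\dots,X_n)=G\big(F(X_{\sigma(1)},m(E_{\sigma(1)})),\dots,F(X_{\sigma(n)},m(E_{\sigma(n)}))\big)$ with $\sigma$ any permutation such that $X_{\sigma(1)}\preceq\dots\preceq X_{\sigma(n)}$; it is defined when this value does not depend on the choice of $\sigma$ for all inputs. *)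

theory Defs
  imports Complex_Main "HOL-Combinatorics.Permutations"
begin

text \<open>Closed subintervals [a,b] of [0,1] are represented by pairs (a,b).\<close>

type_synonym iv = "real \<times> real"

definition LI :: "iv set" where
  "LI = {(a, b). 0 \<le> a \<and> a \<le> b \<and> b \<le> 1}"

definition iv0 :: iv where "iv0 = (0, 0)"
definition iv1 :: iv where "iv1 = (1, 1)"

definition admissible_order :: "(iv \<Rightarrow> iv \<Rightarrow> bool) \<Rightarrow> bool" where
  "admissible_order le \<longleftrightarrow>
     (\<forall>x\<in>LI. le x x) \<and>
     (\<forall>x\<in>LI. \<forall>y\<in>LI. le x y \<and> le y x \<longrightarrow> x = y) \<and>
     (\<forall>x\<in>LI. \<forall>y\<in>LI. \<forall>z\<in>LI. le x y \<and> le y z \<longrightarrow> le x z) \<and>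
     (\<forall>x\<in>LI. \<forall>y\<in>LI. le x y \<or> le y x) \<and>
     (\<forall>a b c d. (a, b) \<in> LI \<and> (c, d) \<in> LI \<and> a \<le> c \<and> b \<le> d \<longrightarrow> le (a, b) (c, d))"

definition inputs :: "nat \<Rightarrow> (nat \<Rightarrow> iv) set" where
  "inputs n = {1..n} \<rightarrow> LI"

definition IV_aggregation :: "(iv \<Rightarrow> iv \<Rightarrow> bool) \<Rightarrow> nat \<Rightarrow> ((nat \<Rightarrow> iv) \<Rightarrow> iv) \<Rightarrow> bool" where
  "IV_aggregation le n M \<longleftrightarrow>
     (\<forall>X\<in>inputs n. M X \<in> LI) \<and>
     M (\<lambda>_. iv0) = iv0 \<and> M (\<lambda>_. iv1) = iv1 \<and>
     (\<forall>X\<in>inputs n. \<forall>Y\<in>inputs n. (\<forall>i\<in>{1..n}. le (X i) (Y i)) \<longrightarrow> le (M X) (M Y))"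

definition IV_fuzzy_measure :: "(iv \<Rightarrow> iv \<Rightarrow> bool) \<Rightarrow> nat \<Rightarrow> (nat set \<Rightarrow> iv) \<Rightarrow> bool" where
  "IV_fuzzy_measure le n m \<longleftrightarrow>
     (\<forall>A. A \<subseteq> {1..n} \<longrightarrow> m A \<in> LI) \<and>
     m {} = iv0 \<and> m {1..n} = iv1 \<and>
     (\<forall>A B. A \<subseteq> B \<and> B \<subseteq> {1..n} \<longrightarrow> le (m A) (m B))"

definition sorting_perm :: "(iv \<Rightarrow> iv \<Rightarrow> bool) \<Rightarrow> nat \<Rightarrow> (nat \<Rightarrow> iv) \<Rightarrow> (nat \<Rightarrow> nat) \<Rightarrow> bool" where
  "sorting_perm le n X \<sigma> \<longleftrightarrow> \<sigma> permutes {1..n} \<and>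
     (\<forall>i j. 1 \<le> i \<and> i \<le> j \<and> j \<le> n \<longrightarrow> le (X (\<sigma> i)) (X (\<sigma> j)))"

text \<open>Value of the FG-functional for a given sorting permutation;
  E_{sigma(i)} = {sigma(i),...,sigma(n)} = sigma ` {i..n}.\<close>
definition S_val :: "(iv \<Rightarrow> iv \<Rightarrow> iv) \<Rightarrow> ((nat \<Rightarrow> iv) \<Rightarrow> iv) \<Rightarrow> (nat set \<Rightarrow> iv) \<Rightarrow> nat
     \<Rightarrow> (nat \<Rightarrow> iv) \<Rightarrow> (nat \<Rightarrow> nat) \<Rightarrow> iv" where
  "S_val F G m n X \<sigma> = G (\<lambda>i. F (X (\<sigma> i)) (m (\<sigma> ` {i..n})))"

definition S_well_defined :: "(iv \<Rightarrow> iv \<Rightarrow> bool) \<Rightarrow> (iv \<Rightarrow> iv \<Rightarrow> iv) \<Rightarrow> ((nat \<Rightarrow> iv) \<Rightarrow> iv)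
     \<Rightarrow> (nat set \<Rightarrow> iv) \<Rightarrow> nat \<Rightarrow> bool" where
  "S_well_defined le F G m n \<longleftrightarrow>
     (\<forall>X\<in>inputs n. \<forall>\<sigma> \<tau>. sorting_perm le n X \<sigma> \<and> sorting_perm le n X \<tau> \<longrightarrow>
        S_val F G m n X \<sigma> = S_val F G m n X \<tau>)"

definition S_FG :: "(iv \<Rightarrow> iv \<Rightarrow> bool) \<Rightarrow> (iv \<Rightarrow> iv \<Rightarrow> iv) \<Rightarrow> ((nat \<Rightarrow> iv) \<Rightarrow> iv)
     \<Rightarrow> (nat set \<Rightarrow> iv) \<Rightarrow> nat \<Rightarrow> (nat \<Rightarrow> iv) \<Rightarrow> iv" where
  "S_FG le F G m n X = S_val F G m n X (SOME \<sigma>. sorting_perm le n X \<sigma>)"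

definition iv_max :: "(iv \<Rightarrow> iv \<Rightarrow> bool) \<Rightarrow> nat \<Rightarrow> (nat \<Rightarrow> iv) \<Rightarrow> iv" where
  "iv_max le n X = (THE Z. Z \<in> X ` {1..n} \<and> (\<forall>i\<in>{1..n}. le (X i) Z))"

definition mono_iv :: "(iv \<Rightarrow> iv \<Rightarrow> bool) \<Rightarrow> (iv \<Rightarrow> iv) \<Rightarrow> bool" where
  "mono_iv le f \<longleftrightarrow> (\<forall>x\<in>LI. \<forall>y\<in>LI. le x y \<longrightarrow> le (f x) (f y))"

end

theory Submission
  imports Defs "HOL-Combinatorics.Permutations"
begin
lemma adm_refl: "admissible_order le \<Longrightarrow> x \<in> LI \<Longrightarrow> le x x"
  unfolding admissible_order_def by blast
lemma adm_antisym: "admissible_order le \<Longrightarrow> x \<in> LI \<Longrightarrow> y \<in> LI \<Longrightarrow> le x y \<Longrightarrow> le y x \<Longrightarrow> x = y"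
  unfolding admissible_order_def by blast
lemma adm_trans: "admissible_order le \<Longrightarrow> x \<in> LI \<Longrightarrow> y \<in> LI \<Longrightarrow> z \<in> LI \<Longrightarrow> le x y \<Longrightarrow> le y z \<Longrightarrow> le x z"
  unfolding admissible_order_def by blast
lemma adm_total: "admissible_order le \<Longrightarrow> x \<in> LI \<Longrightarrow> y \<in> LI \<Longrightarrow> le x y \<or> le y x"
  unfolding admissible_order_def by blast
lemma iv0_LI: "iv0 \<in> LI" and iv1_LI: "iv1 \<in> LI"
  by (auto simp: LI_def iv0_def iv1_def)
lemma adm_top: "admissible_order le \<Longrightarrow> x \<in> LI \<Longrightarrow> le x iv1"
  unfolding admissible_order_def iv1_def LI_def
  by (cases x) auto

lemma ex_min:
  assumes adm: "admissible_order le" and "finite S" "S \<noteq> {}" "S \<subseteq> LI"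
  shows "\<exists>a\<in>S. \<forall>b\<in>S. le a b"
  using assms(2-4)
proof (induction S rule: finite_ne_induct)
  case (singleton x) then show ?case using adm_refl[OF adm] by auto
next
  case (insert x F)
  then obtain a where a: "a \<in> F" "\<forall>b\<in>F. le a b" by auto
  show ?case
  proof (cases "le x a")
    case True
    have "\<forall>b\<in>F. le x b"
    proof
      fix b assume "b \<in> F" then show "le x b"
        using adm_trans[OF adm, of x a b] True a insert.prems by auto
    qed
    then show ?thesis using adm_refl[OF adm, of x] insert.prems by auto
  next
    case False
    then have "le a x" using adm_total[OF adm, of x a] insert a by auto
    then show ?thesis using a by auto
  qed
qed

lemma ex_max:
  assumes adm: "admissible_order le" and "finite S" "S \<noteq> {}" "S \<subseteq> LI"
  shows "\<exists>a\<in>S. \<forall>b\<in>S. le b a"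
  using assms(2-4)
proof (induction S rule: finite_ne_induct)
  case (singleton x) then show ?case using adm_refl[OF adm] by auto
next
  case (insert x F)
  then obtain a where a: "a \<in> F" "\<forall>b\<in>F. le b a" by auto
  show ?case
  proof (cases "le a x")
    case True
    have "\<forall>b\<in>F. le b x"
    proof
      fix b assume "b \<in> F" then show "le b x"
        using adm_trans[OF adm, of b a x] True a insert.prems by auto
    qed
    then show ?thesis using adm_refl[OF adm, of x] insert.prems by auto
  next
    case False
    then have "le x a" using adm_total[OF adm, of x a] insert a by auto
    then show ?thesis using a by auto
  qed
qed

lemma iv_max_prop:
  assumes adm: "admissible_order le" and n: "n \<ge> 1" and Z: "\<forall>i\<in>{1..n}. Z i \<in> LI"
  shows "iv_max le n Z \<in> Z ` {1..n} \<and> (\<forall>i\<in>{1..n}. le (Z i) (iv_max le n Z))"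
proof -
  have "Z ` {1..n} \<noteq> {}" "Z ` {1..n} \<subseteq> LI" using n Z by auto
  then obtain M where M: "M \<in> Z ` {1..n}" "\<forall>b\<in>Z ` {1..n}. le b M"
    using ex_max[OF adm, of "Z ` {1..n}"] by blast
  show ?thesis unfolding iv_max_def
  proof (rule theI2[where a = M])
    show "M \<in> Z ` {1..n} \<and> (\<forall>i\<in>{1..n}. le (Z i) M)" using M by auto
  next
    fix x assume "x \<in> Z ` {1..n} \<and> (\<forall>i\<in>{1..n}. le (Z i) x)"
    then show "x = M" using M Z adm_antisym[OF adm, of x M] by auto
  next
    fix x assume "x \<in> Z ` {1..n} \<and> (\<forall>i\<in>{1..n}. le (Z i) x)"
    then show "x \<in> Z ` {1..n} \<and> (\<forall>i\<in>{1..n}. le (Z i) x)" .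
  qed
qed

lemma iv_max_LI:
  assumes adm: "admissible_order le" and n: "n \<ge> 1" and Z: "\<forall>i\<in>{1..n}. Z i \<in> LI"
  shows "iv_max le n Z \<in> LI"
proof -
  obtain i where "i \<in> {1..n}" "iv_max le n Z = Z i" using iv_max_prop[OF adm n Z] by blast
  then show ?thesis using Z by simp
qed

lemma iv_max_eq:
  assumes adm: "admissible_order le" and n: "n \<ge> 1" and Z: "\<forall>i\<in>{1..n}. Z i \<in> LI"
    and W: "\<forall>i\<in>{1..n}. W i \<in> LI"
    and ZW: "\<forall>i\<in>{1..n}. \<exists>j\<in>{1..n}. le (Z i) (W j)"
    and WZ: "\<forall>i\<in>{1..n}. \<exists>j\<in>{1..n}. le (W i) (Z j)"
  shows "iv_max le n Z = iv_max le n W"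
proof -
  note PZ = iv_max_prop[OF adm n Z] and PW = iv_max_prop[OF adm n W]
  obtain i where i: "i \<in> {1..n}" "iv_max le n Z = Z i" using PZ by auto
  obtain j where j: "j \<in> {1..n}" "le (Z i) (W j)" using ZW i(1) by blast
  have MZ: "iv_max le n Z \<in> LI" "iv_max le n W \<in> LI" using PZ PW Z W by auto
  have 1: "le (iv_max le n Z) (iv_max le n W)"
    using adm_trans[OF adm, of "Z i" "W j" "iv_max le n W"] i j PW Z W by auto
  obtain i' where i': "i' \<in> {1..n}" "iv_max le n W = W i'" using PW by auto
  obtain j' where j': "j' \<in> {1..n}" "le (W i') (Z j')" using WZ i'(1) by blast
  have 2: "le (iv_max le n W) (iv_max le n Z)"
    using adm_trans[OF adm, of "W i'" "Z j'" "iv_max le n Z"] i' j' PZ Z W by auto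
  show ?thesis using adm_antisym[OF adm MZ 1 2] .
qed

lemma sorted_list_exists:
  assumes adm: "admissible_order le" and X: "\<forall>i\<in>S. X i \<in> LI" and fin: "finite S"
  shows "\<exists>xs. distinct xs \<and> set xs = S \<and> sorted_wrt (\<lambda>a b. le (X a) (X b)) xs"
  using X fin
proof (induction "card S" arbitrary: S rule: less_induct)
  case less
  show ?case
  proof (cases "S = {}")
    case True then show ?thesis by auto
  next
    case False
    have "X ` S \<noteq> {}" "X ` S \<subseteq> LI" using less.prems False by auto
    then obtain v where v: "v \<in> X ` S" "\<forall>b\<in>X ` S. le v b"
      using ex_min[OF adm, of "X ` S"] less.prems by blast
    then obtain a where a: "a \<in> S" "v = X a" by auto
    have "card (S - {a}) < card S" using a less.prems by (meson card_Diff1_less)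
    then obtain xs where xs: "distinct xs" "set xs = S - {a}" "sorted_wrt (\<lambda>a b. le (X a) (X b)) xs"
      using less by (metis DiffD1 finite_Diff)
    show ?thesis
      by (rule exI[of _ "a # xs"]) (use xs a v in auto)
  qed
qed

lemma sorting_exists:
  assumes adm: "admissible_order le" and X: "X \<in> inputs n"
  shows "\<exists>\<sigma>. sorting_perm le n X \<sigma>"
proof -
  obtain xs where xs: "distinct xs" "set xs = {1..n}" "sorted_wrt (\<lambda>a b. le (X a) (X b)) xs"
    using sorted_list_exists[OF adm, of "{1..n}" X] X by (auto simp: inputs_def)
  have len: "length xs = n" using xs distinct_card by fastforce
  define \<sigma> where "\<sigma> = (\<lambda>i. if i \<in> {1..n} then xs ! (i - 1) else i)"
  have inj: "inj_on \<sigma> {1..n}"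
    unfolding inj_on_def \<sigma>_def using xs(1) len by (auto simp: nth_eq_iff_index_eq)
  have img: "\<sigma> ` {1..n} = {1..n}"
  proof
    show "\<sigma> ` {1..n} \<subseteq> {1..n}"
    proof
      fix y assume "y \<in> \<sigma> ` {1..n}"
      then obtain i where i: "i \<in> {1..n}" "y = xs ! (i - 1)" unfolding \<sigma>_def by auto
      then have "xs ! (i - 1) \<in> set xs" using len by (intro nth_mem) auto
      then show "y \<in> {1..n}" using i xs(2) by simp
    qed
  next
    show "{1..n} \<subseteq> \<sigma> ` {1..n}"
    proof
      fix y assume "y \<in> {1..n}"
      then obtain k where k: "k < n" "xs ! k = y" using xs(2) len by (metis in_set_conv_nth)
      then have "\<sigma> (k+1) = y" "k + 1 \<in> {1..n}" unfolding \<sigma>_def by auto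
      then show "y \<in> \<sigma> ` {1..n}" by force
    qed
  qed
  have perm: "\<sigma> permutes {1..n}"
    by (rule bij_imp_permutes) (use inj img in \<open>auto simp: bij_betw_def \<sigma>_def\<close>)
  have "\<forall>i j. 1 \<le> i \<and> i \<le> j \<and> j \<le> n \<longrightarrow> le (X (\<sigma> i)) (X (\<sigma> j))"
  proof (intro allI impI)
    fix i j assume ij: "1 \<le> i \<and> i \<le> j \<and> j \<le> n"
    show "le (X (\<sigma> i)) (X (\<sigma> j))"
    proof (cases "i = j")
      case True
      have "\<sigma> j \<in> {1..n}" using ij img by auto
      then have "X (\<sigma> j) \<in> LI" using X unfolding inputs_def by auto
      then show ?thesis using adm_refl[OF adm] True by simp
    next
      case False
      then have "i - 1 < j - 1" "j - 1 < length xs" using ij len by auto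
      then show ?thesis using xs(3) ij unfolding \<sigma>_def sorted_wrt_iff_nth_less by auto
    qed
  qed
  then show ?thesis using perm unfolding sorting_perm_def by blast
qed


lemma mono_ivD: "mono_iv le g \<Longrightarrow> x \<in> LI \<Longrightarrow> y \<in> LI \<Longrightarrow> le x y \<Longrightarrow> le (g x) (g y)"
  unfolding mono_iv_def by blast

lemma sort_in:
  assumes "sorting_perm le n X \<sigma>" "i \<in> {1..n}" shows "\<sigma> i \<in> {1..n}"
proof -
  have pp: "\<sigma> permutes {1..n}" using assms(1) unfolding sorting_perm_def by blast
  show ?thesis using permutes_in_image[OF pp, of i] assms(2) by blast
qed

lemma V_in:
  assumes X: "X \<in> inputs n" and s: "\<sigma> permutes {1..n}" and mm: "IV_fuzzy_measure le n m"
    and F_range: "\<forall>x\<in>LI. \<forall>y\<in>LI. F x y \<in> LI"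
  shows "(\<lambda>i. F (X (\<sigma> i)) (m (\<sigma> ` {i..n}))) \<in> inputs n"
proof -
  have "\<forall>i\<in>{1..n}. F (X (\<sigma> i)) (m (\<sigma> ` {i..n})) \<in> LI"
  proof
    fix i assume i: "i \<in> {1..n}"
    have "\<sigma> i \<in> {1..n}" using permutes_in_image[OF s, of i] i by blast
    then have "X (\<sigma> i) \<in> LI" using X unfolding inputs_def by auto
    moreover have "\<sigma> ` {i..n} \<subseteq> {1..n}" using i permutes_image[OF s] by auto
    then have "m (\<sigma> ` {i..n}) \<in> LI" using mm unfolding IV_fuzzy_measure_def by blast
    ultimately show "F (X (\<sigma> i)) (m (\<sigma> ` {i..n})) \<in> LI" using F_range by blast
  qed
  then show ?thesis unfolding inputs_def by auto
qed

lemma first_min: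
  assumes s: "sorting_perm le n X \<sigma>" and j: "j \<in> {1..n}"
  shows "le (X (\<sigma> 1)) (X j)"
proof -
  have p: "\<sigma> permutes {1..n}" using s unfolding sorting_perm_def by blast
  have ij: "inv \<sigma> j \<in> {1..n}" using permutes_in_image[OF permutes_inv[OF p], of j] j by blast
  have "\<sigma> (inv \<sigma> j) = j" using permutes_inverses[OF p] by blast
  have h: "\<forall>i j. 1 \<le> i \<and> i \<le> j \<and> j \<le> n \<longrightarrow> le (X (\<sigma> i)) (X (\<sigma> j))"
    using s unfolding sorting_perm_def by blast
  have r: "1 \<le> (1::nat) \<and> 1 \<le> inv \<sigma> j \<and> inv \<sigma> j \<le> n" using ij by auto
  have "le (X (\<sigma> 1)) (X (\<sigma> (inv \<sigma> j)))" using h[rule_format, OF r] .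
  then show ?thesis using \<open>\<sigma> (inv \<sigma> j) = j\<close> by simp
qed

lemma max_key:
  assumes adm: "admissible_order le" and n: "n \<ge> 1" and s: "sorting_perm le n X \<sigma>"
    and X: "X \<in> inputs n" and mm: "IV_fuzzy_measure le n m"
    and F_range: "\<forall>x\<in>LI. \<forall>y\<in>LI. F x y \<in> LI"
    and F2: "\<forall>x\<in>LI. mono_iv le (\<lambda>y. F x y)"
  shows "iv_max le n (\<lambda>i. F (X (\<sigma> i)) (m (\<sigma> ` {i..n})))
       = iv_max le n (\<lambda>j. F (X j) (m {k\<in>{1..n}. le (X j) (X k)}))"
proof (rule iv_max_eq[OF adm n])
  have p: "\<sigma> permutes {1..n}" using s unfolding sorting_perm_def by blast
  have XL: "\<And>j. j \<in> {1..n} \<Longrightarrow> X j \<in> LI" using X unfolding inputs_def by auto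
  have mL: "\<And>A. A \<subseteq> {1..n} \<Longrightarrow> m A \<in> LI" using mm unfolding IV_fuzzy_measure_def by blast
  have mM: "\<And>A B. A \<subseteq> B \<Longrightarrow> B \<subseteq> {1..n} \<Longrightarrow> le (m A) (m B)"
    using mm unfolding IV_fuzzy_measure_def by blast
  show "\<forall>i\<in>{1..n}. F (X (\<sigma> i)) (m (\<sigma> ` {i..n})) \<in> LI"
    using V_in[OF X p mm F_range] unfolding inputs_def by auto
  show HL: "\<forall>j\<in>{1..n}. F (X j) (m {k\<in>{1..n}. le (X j) (X k)}) \<in> LI"
  proof
    fix j assume j: "j \<in> {1..n}"
    have "m {k\<in>{1..n}. le (X j) (X k)} \<in> LI" by (rule mL) auto
    then show "F (X j) (m {k\<in>{1..n}. le (X j) (X k)}) \<in> LI" using XL[OF j] F_range by blast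
  qed
  show "\<forall>i\<in>{1..n}. \<exists>j\<in>{1..n}. le (F (X (\<sigma> i)) (m (\<sigma> ` {i..n})))
                                     (F (X j) (m {k\<in>{1..n}. le (X j) (X k)}))"
  proof
    fix i assume i: "i \<in> {1..n}"
    have si: "\<sigma> i \<in> {1..n}" using sort_in[OF s i] .
    have sub: "\<sigma> ` {i..n} \<subseteq> {k\<in>{1..n}. le (X (\<sigma> i)) (X k)}"
    proof
      fix k assume "k \<in> \<sigma> ` {i..n}"
      then obtain p where pp: "p \<in> {i..n}" "k = \<sigma> p" by auto
      then have "k \<in> {1..n}" using sort_in[OF s, of p] i by auto
      moreover have "le (X (\<sigma> i)) (X k)" using s pp i unfolding sorting_perm_def by auto
      ultimately show "k \<in> {k\<in>{1..n}. le (X (\<sigma> i)) (X k)}" by auto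
    qed
    have m1: "le (m (\<sigma> ` {i..n})) (m {k\<in>{1..n}. le (X (\<sigma> i)) (X k)})"
      by (rule mM[OF sub]) auto
    have m2: "m {k\<in>{1..n}. le (X (\<sigma> i)) (X k)} \<in> LI" by (rule mL) auto
    have m3: "m (\<sigma> ` {i..n}) \<in> LI" by (rule mL) (use sub in auto)
    have le1: "le (F (X (\<sigma> i)) (m (\<sigma> ` {i..n})))
                     (F (X (\<sigma> i)) (m {k\<in>{1..n}. le (X (\<sigma> i)) (X k)}))"
      by (rule mono_ivD[OF F2[rule_format, OF XL[OF si]] m3 m2 m1])
    show "\<exists>j\<in>{1..n}. le (F (X (\<sigma> i)) (m (\<sigma> ` {i..n})))
                                     (F (X j) (m {k\<in>{1..n}. le (X j) (X k)}))"
    proof (rule bexI[where x="\<sigma> i"])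
      show "\<sigma> i \<in> {1..n}" by (rule si)
      show "le (F (X (\<sigma> i)) (m (\<sigma> ` {i..n})))
                                     (F (X (\<sigma> i)) (m {k\<in>{1..n}. le (X (\<sigma> i)) (X k)}))" by (rule le1)
    qed
  qed
  show "\<forall>j\<in>{1..n}. \<exists>i\<in>{1..n}. le (F (X j) (m {k\<in>{1..n}. le (X j) (X k)}))
                                   (F (X (\<sigma> i)) (m (\<sigma> ` {i..n})))"
  proof
    fix j assume j: "j \<in> {1..n}"
    define P where "P = {p\<in>{1..n}. X (\<sigma> p) = X j}"
    have ij: "inv \<sigma> j \<in> {1..n}" using permutes_in_image[OF permutes_inv[OF p]] j by blast
    moreover have "\<sigma> (inv \<sigma> j) = j" using permutes_inverses[OF p] by blast
    ultimately have "inv \<sigma> j \<in> P" unfolding P_def by auto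
    moreover have finP: "finite P" unfolding P_def by simp
    ultimately have PM: "Min P \<in> P" "\<forall>p\<in>P. Min P \<le> p"
      using Min_in[OF finP] Min_le[OF finP] by blast+
    define i where "i = Min P"
    have i: "i \<in> {1..n}" "X (\<sigma> i) = X j" using PM unfolding i_def P_def by auto
    have eq: "\<sigma> ` {i..n} = {k\<in>{1..n}. le (X j) (X k)}"
    proof
      show "\<sigma> ` {i..n} \<subseteq> {k\<in>{1..n}. le (X j) (X k)}"
      proof
        fix k assume "k \<in> \<sigma> ` {i..n}"
        then obtain p where pp: "p \<in> {i..n}" "k = \<sigma> p" by auto
        then have "k \<in> {1..n}" using sort_in[OF s, of p] i by auto
        moreover have "le (X (\<sigma> i)) (X (\<sigma> p))" using s pp(1) i(1) unfolding sorting_perm_def by auto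
        ultimately show "k \<in> {k\<in>{1..n}. le (X j) (X k)}" using i(2) pp(2) by auto
      qed
    next
      show "{k\<in>{1..n}. le (X j) (X k)} \<subseteq> \<sigma> ` {i..n}"
      proof
        fix k assume k: "k \<in> {k\<in>{1..n}. le (X j) (X k)}"
        define q where "q = inv \<sigma> k"
        have kn: "k \<in> {1..n}" using k by blast
        have q: "q \<in> {1..n}" "\<sigma> q = k" unfolding q_def
          using permutes_in_image[OF permutes_inv[OF p]] kn permutes_inverses(1)[OF p] by blast+
        have "q \<ge> i"
        proof (rule ccontr)
          assume "\<not> q \<ge> i"
          then have "le (X (\<sigma> q)) (X (\<sigma> i))" using s q(1) i(1) unfolding sorting_perm_def by auto
          moreover have "le (X (\<sigma> i)) (X (\<sigma> q))" using k q i by auto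
          moreover have "X (\<sigma> q) \<in> LI" using XL[OF kn] q(2) by simp
          moreover have "X (\<sigma> i) \<in> LI" by (rule XL[OF sort_in[OF s i(1)]])
          ultimately have "X (\<sigma> q) = X (\<sigma> i)"
            using adm_antisym[OF adm] by blast
          then have "q \<in> P" using q i unfolding P_def by auto
          then show False using PM \<open>\<not> q \<ge> i\<close> unfolding i_def by auto
        qed
        then show "k \<in> \<sigma> ` {i..n}" using q by auto
      qed
    qed
    have "F (X j) (m {k\<in>{1..n}. le (X j) (X k)}) = F (X (\<sigma> i)) (m (\<sigma> ` {i..n}))"
      using eq i by simp
    then show "\<exists>i\<in>{1..n}. le (F (X j) (m {k\<in>{1..n}. le (X j) (X k)}))
                                   (F (X (\<sigma> i)) (m (\<sigma> ` {i..n})))"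
      using i(1) HL j adm_refl[OF adm] by (metis (no_types, lifting))
  qed
qed


lemma some_sort:
  assumes adm: "admissible_order le" and X: "X \<in> inputs n"
  shows "sorting_perm le n X (SOME \<sigma>. sorting_perm le n X \<sigma>)"
  using someI_ex[OF sorting_exists[OF adm X]] .

lemma sort_perm: "sorting_perm le n X \<sigma> \<Longrightarrow> \<sigma> permutes {1..n}"
  unfolding sorting_perm_def by blast

lemma inputsD: "X \<in> inputs n \<Longrightarrow> j \<in> {1..n} \<Longrightarrow> X j \<in> LI"
  unfolding inputs_def by auto

lemma const_inputs: "c \<in> LI \<Longrightarrow> (\<lambda>_. c) \<in> inputs n"
  unfolding inputs_def by auto

theorem corollary6:
  fixes le :: "iv \<Rightarrow> iv \<Rightarrow> bool"
    and F :: "iv \<Rightarrow> iv \<Rightarrow> iv"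
    and G :: "(nat \<Rightarrow> iv) \<Rightarrow> iv"
    and n :: nat
  assumes n2: "n \<ge> 2"
    and adm: "admissible_order le"
    and F_range: "\<forall>x\<in>LI. \<forall>y\<in>LI. F x y \<in> LI"
    and G_range: "\<forall>X\<in>inputs n. G X \<in> LI"
    and cases:
      "(mono_iv le (\<lambda>x. F x iv1) \<and> F iv0 iv1 = iv0 \<and> F iv1 iv1 = iv1 \<and>
         (\<exists>f. (\<forall>x\<in>LI. f x \<in> LI) \<and> mono_iv le f \<and> f iv0 = iv0 \<and> f iv1 = iv1 \<and>
              (\<forall>X\<in>inputs n. G X = f (X 1))))
       \<or>
       ((\<forall>y\<in>LI. F iv0 y = iv0) \<and> F iv1 iv1 = iv1 \<and>
         (\<forall>y\<in>LI. mono_iv le (\<lambda>x. F x y)) \<and> (\<forall>x\<in>LI. mono_iv le (\<lambda>y. F x y)) \<and>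
         (\<exists>f. (\<forall>x\<in>LI. f x \<in> LI) \<and> mono_iv le f \<and> f iv0 = iv0 \<and> f iv1 = iv1 \<and>
              (\<forall>X\<in>inputs n. G X = f (iv_max le n X))))"
  shows "\<forall>m. IV_fuzzy_measure le n m \<longrightarrow>
           S_well_defined le F G m n \<and> IV_aggregation le n (S_FG le F G m n)"
proof (intro allI impI)
  fix m assume mm: "IV_fuzzy_measure le n m"
  have n1: "n \<ge> 1" and one: "1 \<in> {1..n}" using n2 by auto
  have mL: "\<And>A. A \<subseteq> {1..n} \<Longrightarrow> m A \<in> LI" using mm unfolding IV_fuzzy_measure_def by blast
  have mM: "\<And>A B. A \<subseteq> B \<Longrightarrow> B \<subseteq> {1..n} \<Longrightarrow> le (m A) (m B)"
    using mm unfolding IV_fuzzy_measure_def by blast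
  have mN: "m {1..n} = iv1" using mm unfolding IV_fuzzy_measure_def by blast
  have SFG: "\<And>X. S_FG le F G m n X = S_val F G m n X (SOME \<sigma>. sorting_perm le n X \<sigma>)"
    by (simp add: S_FG_def)
  have Vin: "\<And>X \<sigma>. X \<in> inputs n \<Longrightarrow> sorting_perm le n X \<sigma> \<Longrightarrow>
      (\<lambda>i. F (X (\<sigma> i)) (m (\<sigma> ` {i..n}))) \<in> inputs n"
    using V_in[OF _ _ mm F_range] sort_perm by blast
  have Srange: "\<And>X. X \<in> inputs n \<Longrightarrow> S_FG le F G m n X \<in> LI"
    unfolding SFG S_val_def using G_range Vin some_sort[OF adm] by blast
  show "S_well_defined le F G m n \<and> IV_aggregation le n (S_FG le F G m n)"
    using cases
  proof (elim disjE conjE exE)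
    fix f
    assume F1: "mono_iv le (\<lambda>x. F x iv1)" and F01: "F iv0 iv1 = iv0" and F11: "F iv1 iv1 = iv1"
      and fL: "\<forall>x\<in>LI. f x \<in> LI" and fM: "mono_iv le f" and f0: "f iv0 = iv0" and f1: "f iv1 = iv1"
      and Gf: "\<forall>X\<in>inputs n. G X = f (X 1)"
    have key: "\<And>X \<sigma>. X \<in> inputs n \<Longrightarrow> sorting_perm le n X \<sigma> \<Longrightarrow>
        S_val F G m n X \<sigma> = f (F (X (\<sigma> 1)) iv1)"
    proof -
      fix X \<sigma> assume X: "X \<in> inputs n" and s: "sorting_perm le n X \<sigma>"
      have "S_val F G m n X \<sigma> = f (F (X (\<sigma> 1)) (m (\<sigma> ` {1..n})))"
        unfolding S_val_def using Gf Vin[OF X s] by simp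
      also have "\<sigma> ` {1..n} = {1..n}" using permutes_image[OF sort_perm[OF s]] .
      finally show "S_val F G m n X \<sigma> = f (F (X (\<sigma> 1)) iv1)" using mN by simp
    qed
    have minL: "\<And>X \<sigma>. X \<in> inputs n \<Longrightarrow> sorting_perm le n X \<sigma> \<Longrightarrow> X (\<sigma> 1) \<in> LI"
      using inputsD sort_in one by blast
    have wd: "S_well_defined le F G m n"
      unfolding S_well_defined_def
    proof (intro ballI allI impI)
      fix X \<sigma> \<tau> assume X: "X \<in> inputs n" and st: "sorting_perm le n X \<sigma> \<and> sorting_perm le n X \<tau>"
      have "le (X (\<sigma> 1)) (X (\<tau> 1))" using first_min[of le n X \<sigma>] st sort_in[of le n X \<tau> 1] one by blast
      moreover have "le (X (\<tau> 1)) (X (\<sigma> 1))" using first_min[of le n X \<tau>] st sort_in[of le n X \<sigma> 1] one by blast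
      ultimately have "X (\<sigma> 1) = X (\<tau> 1)" using adm_antisym[OF adm] minL X st by blast
      then show "S_val F G m n X \<sigma> = S_val F G m n X \<tau>" using key X st by simp
    qed
    have agg: "IV_aggregation le n (S_FG le F G m n)"
      unfolding IV_aggregation_def
    proof (intro conjI ballI impI)
      fix X assume "X \<in> inputs n" then show "S_FG le F G m n X \<in> LI" by (rule Srange)
    next
      show "S_FG le F G m n (\<lambda>_. iv0) = iv0"
        unfolding SFG using key[OF const_inputs[OF iv0_LI] some_sort[OF adm const_inputs[OF iv0_LI]]] F01 f0
        by simp
    next
      show "S_FG le F G m n (\<lambda>_. iv1) = iv1"
        unfolding SFG using key[OF const_inputs[OF iv1_LI] some_sort[OF adm const_inputs[OF iv1_LI]]] F11 f1
        by simp
    next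
      fix X Y assume X: "X \<in> inputs n" and Y: "Y \<in> inputs n" and XY: "\<forall>i\<in>{1..n}. le (X i) (Y i)"
      define \<sigma> where "\<sigma> = (SOME \<sigma>. sorting_perm le n X \<sigma>)"
      define \<tau> where "\<tau> = (SOME \<sigma>. sorting_perm le n Y \<sigma>)"
      have s: "sorting_perm le n X \<sigma>" unfolding \<sigma>_def by (rule some_sort[OF adm X])
      have t: "sorting_perm le n Y \<tau>" unfolding \<tau>_def by (rule some_sort[OF adm Y])
      have t1: "\<tau> 1 \<in> {1..n}" by (rule sort_in[OF t one])
      have a: "le (X (\<sigma> 1)) (X (\<tau> 1))" by (rule first_min[OF s t1])
      have b: "le (X (\<tau> 1)) (Y (\<tau> 1))" using XY t1 by blast
      have c: "le (X (\<sigma> 1)) (Y (\<tau> 1))"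
        using adm_trans[OF adm _ _ _ a b] minL[OF X s] inputsD[OF X t1] inputsD[OF Y t1] by blast
      have d: "le (F (X (\<sigma> 1)) iv1) (F (Y (\<tau> 1)) iv1)"
        by (rule mono_ivD[OF F1 minL[OF X s] inputsD[OF Y t1] c])
      have e: "le (f (F (X (\<sigma> 1)) iv1)) (f (F (Y (\<tau> 1)) iv1))"
        by (rule mono_ivD[OF fM _ _ d]) (use F_range iv1_LI minL[OF X s] inputsD[OF Y t1] in blast)+
      show "le (S_FG le F G m n X) (S_FG le F G m n Y)"
        unfolding SFG using e key[OF X s] key[OF Y t] unfolding \<sigma>_def \<tau>_def by simp
    qed
    show ?thesis using wd agg by blast
  next
    fix f
    assume F0: "\<forall>y\<in>LI. F iv0 y = iv0" and F11: "F iv1 iv1 = iv1"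
      and F1: "\<forall>y\<in>LI. mono_iv le (\<lambda>x. F x y)" and F2: "\<forall>x\<in>LI. mono_iv le (\<lambda>y. F x y)"
      and fL: "\<forall>x\<in>LI. f x \<in> LI" and fM: "mono_iv le f" and f0: "f iv0 = iv0" and f1: "f iv1 = iv1"
      and Gf: "\<forall>X\<in>inputs n. G X = f (iv_max le n X)"
    define H where "H = (\<lambda>X j. F (X j) (m {k\<in>{1..n}. le (X j) (X k)}))"
    have HL: "\<And>X. X \<in> inputs n \<Longrightarrow> \<forall>j\<in>{1..n}. H X j \<in> LI"
    proof
      fix X j assume X: "X \<in> inputs n" and j: "j \<in> {1..n}"
      have "m {k\<in>{1..n}. le (X j) (X k)} \<in> LI" by (rule mL) auto
      then show "H X j \<in> LI" unfolding H_def using inputsD[OF X j] F_range by blast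
    qed
    have key: "\<And>X \<sigma>. X \<in> inputs n \<Longrightarrow> sorting_perm le n X \<sigma> \<Longrightarrow>
        S_val F G m n X \<sigma> = f (iv_max le n (H X))"
    proof -
      fix X \<sigma> assume X: "X \<in> inputs n" and s: "sorting_perm le n X \<sigma>"
      have "S_val F G m n X \<sigma> = f (iv_max le n (\<lambda>i. F (X (\<sigma> i)) (m (\<sigma> ` {i..n}))))"
        unfolding S_val_def using Gf Vin[OF X s] by simp
      also have "iv_max le n (\<lambda>i. F (X (\<sigma> i)) (m (\<sigma> ` {i..n}))) = iv_max le n (H X)"
        unfolding H_def by (rule max_key[OF adm n1 s X mm F_range F2])
      finally show "S_val F G m n X \<sigma> = f (iv_max le n (H X))" .
    qed
    have wd: "S_well_defined le F G m n"
      unfolding S_well_defined_def using key by simp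
    have agg: "IV_aggregation le n (S_FG le F G m n)"
      unfolding IV_aggregation_def
    proof (intro conjI ballI impI)
      fix X assume "X \<in> inputs n" then show "S_FG le F G m n X \<in> LI" by (rule Srange)
    next
      have I0: "(\<lambda>_. iv0) \<in> inputs n" by (rule const_inputs[OF iv0_LI])
      obtain j where j: "j \<in> {1..n}" "iv_max le n (H (\<lambda>_. iv0)) = H (\<lambda>_. iv0) j"
        using iv_max_prop[OF adm n1 HL[OF I0]] by auto
      have "m {k\<in>{1..n}. le iv0 iv0} \<in> LI" by (rule mL) auto
      then have "H (\<lambda>_. iv0) j = iv0" unfolding H_def using F0 by simp
      then show "S_FG le F G m n (\<lambda>_. iv0) = iv0"
        unfolding SFG using key[OF I0 some_sort[OF adm I0]] j f0 by simp
    next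
      have I1: "(\<lambda>_. iv1) \<in> inputs n" by (rule const_inputs[OF iv1_LI])
      note P = iv_max_prop[OF adm n1 HL[OF I1]]
      have "{k\<in>{1..n}. le iv1 iv1} = {1..n}" using adm_refl[OF adm iv1_LI] by auto
      then have H1: "H (\<lambda>_. iv1) 1 = iv1" unfolding H_def using F11 mN by simp
      obtain i0 where i0: "i0 \<in> {1..n}" "iv_max le n (H (\<lambda>_. iv1)) = H (\<lambda>_. iv1) i0"
        using P by blast
      have Mmax: "iv_max le n (H (\<lambda>_. iv1)) \<in> LI" using HL[OF I1] i0 by simp
      have "le iv1 (iv_max le n (H (\<lambda>_. iv1)))" using P one H1 by metis
      moreover have "le (iv_max le n (H (\<lambda>_. iv1))) iv1" by (rule adm_top[OF adm Mmax])
      ultimately have "iv_max le n (H (\<lambda>_. iv1)) = iv1"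
        using adm_antisym[OF adm Mmax iv1_LI] by blast
      then show "S_FG le F G m n (\<lambda>_. iv1) = iv1"
        unfolding SFG using key[OF I1 some_sort[OF adm I1]] f1 by simp
    next
      fix X Y assume X: "X \<in> inputs n" and Y: "Y \<in> inputs n" and XY: "\<forall>i\<in>{1..n}. le (X i) (Y i)"
      note PX = iv_max_prop[OF adm n1 HL[OF X]] and PY = iv_max_prop[OF adm n1 HL[OF Y]]
      obtain j where j: "j \<in> {1..n}" "iv_max le n (H X) = H X j" using PX by auto
      define A where "A = {k\<in>{1..n}. le (X j) (X k)}"
      have jA: "j \<in> A" unfolding A_def using j adm_refl[OF adm inputsD[OF X j(1)]] by blast
      have "Y ` A \<noteq> {}" "Y ` A \<subseteq> LI" "finite (Y ` A)" using jA inputsD[OF Y] unfolding A_def by auto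
      then obtain y where y: "y \<in> Y ` A" "\<forall>b\<in>Y ` A. le y b" using ex_min[OF adm] by meson
      then obtain k where k: "k \<in> A" "y = Y k" by blast
      have kn: "k \<in> {1..n}" using k unfolding A_def by blast
      define B where "B = {k'\<in>{1..n}. le (Y k) (Y k')}"
      have AB: "A \<subseteq> B" unfolding B_def using y k unfolding A_def by auto
      have Bn: "B \<subseteq> {1..n}" unfolding B_def by auto
      have xk: "le (X j) (X k)" using k unfolding A_def by blast
      have xy: "le (X j) (Y k)"
        using adm_trans[OF adm inputsD[OF X j(1)] inputsD[OF X kn] inputsD[OF Y kn] xk] XY kn by blast
      have mA: "m A \<in> LI" "m B \<in> LI" using mL AB Bn by auto
      have s1: "le (F (X j) (m A)) (F (Y k) (m A))"
        by (rule mono_ivD[OF F1[rule_format, OF mA(1)] inputsD[OF X j(1)] inputsD[OF Y kn] xy])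
      have s2: "le (F (Y k) (m A)) (F (Y k) (m B))"
        by (rule mono_ivD[OF F2[rule_format, OF inputsD[OF Y kn]] mA mM[OF AB Bn]])
      have HXj: "H X j = F (X j) (m A)" unfolding H_def A_def ..
      have HYk: "H Y k = F (Y k) (m B)" unfolding H_def B_def ..
      have L1: "F (X j) (m A) \<in> LI" "F (Y k) (m A) \<in> LI" "F (Y k) (m B) \<in> LI"
        using F_range mA inputsD[OF X j(1)] inputsD[OF Y kn] by blast+
      have s3: "le (H X j) (H Y k)" unfolding HXj HYk
        using adm_trans[OF adm L1 s1 s2] .
      have s4: "le (H Y k) (iv_max le n (H Y))" using PY kn by blast
      have MX: "iv_max le n (H X) \<in> LI" "iv_max le n (H Y) \<in> LI" using iv_max_LI[OF adm n1 HL[OF X]] iv_max_LI[OF adm n1 HL[OF Y]] by blast+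
      have s5: "le (iv_max le n (H X)) (iv_max le n (H Y))"
        unfolding j(2) using adm_trans[OF adm HL[OF X, rule_format, OF j(1)] HL[OF Y, rule_format, OF kn] MX(2) s3 s4] .
      have "le (f (iv_max le n (H X))) (f (iv_max le n (H Y)))"
        by (rule mono_ivD[OF fM MX s5])
      then show "le (S_FG le F G m n X) (S_FG le F G m n Y)"
        unfolding SFG using key[OF X some_sort[OF adm X]] key[OF Y some_sort[OF adm Y]] by simp
    qed
    show ?thesis using wd agg by blast
  qed
qed

end
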